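(* Let $p:\mathbb R^n\to\mathbb R$ be a polynomial with $p(\theta_0)=0$, and assume $p$ is nonnegative on the ball $B_\epsilon(\theta_0)$ centered at $\theta_0$ for some radius $\epsilon>0$. If $m\ge n/2$, then $\int_{B_\epsilon(\theta_0)}p(\theta)^{-m}\,\mathrm d\mu(\theta)=\infty$, where $\mu$ is Lebesgue measure. *)

theory Defs
  imports "HOL-Analysis.Analysis"
begin

inductive real_poly_fun :: "(real ^ 'n \<Rightarrow> real) \<Rightarrow> bool" where
  const: "real_poly_fun (\<lambda>x. c)"
| coord: "real_poly_fun (\<lambda>x. x $ i)"
| add: "real_poly_fun p \<Longrightarrow> real_poly_fun q \<Longrightarrow> real_poly_fun (\<lambda>x. p x + q x)"
| mult: "real_poly_fun p \<Longrightarrow> real_poly_fun q \<Longrightarrow> real_poly_fun (\<lambda>x. p x * q x)"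

definition neg_pow_ennreal :: "real \<Rightarrow> real \<Rightarrow> ennreal" where
  "neg_pow_ennreal t m = (if t = 0 then \<infinity> else ennreal (t powr (- m)))"

end

theory Submission
  imports Defs
begin

lemma poly_taylor:
  fixes p :: "real ^ 'n \<Rightarrow> real"
  assumes "real_poly_fun p"
  shows "\<exists>g C. C \<ge> 0 \<and> (\<forall>h. norm h \<le> 1 \<longrightarrow> \<bar>p (x + h) - p x - g \<bullet> h\<bar> \<le> C * (norm h)^2)"
  using assms
proof (induction p)
  case (const c)
  then show ?case by (intro exI[of _ 0]) auto
next
  case (coord i)
  then show ?case by (intro exI[of _ "axis i 1"] exI[of _ 0]) (auto simp: inner_axis')
next
  case (add p q)
  then obtain g1 C1 g2 C2 where 1: "C1 \<ge> 0" "\<forall>h. norm h \<le> 1 \<longrightarrow> \<bar>p (x + h) - p x - g1 \<bullet> h\<bar> \<le> C1 * (norm h)^2"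
   and 2: "C2 \<ge> 0" "\<forall>h. norm h \<le> 1 \<longrightarrow> \<bar>q (x + h) - q x - g2 \<bullet> h\<bar> \<le> C2 * (norm h)^2" by blast
  show ?case
  proof (intro exI[of _ "g1 + g2"] exI[of _ "C1 + C2"] conjI allI impI)
    fix h :: "real ^ 'n" assume h: "norm h \<le> 1"
    have "\<bar>p (x + h) + q (x + h) - (p x + q x) - (g1 + g2) \<bullet> h\<bar>
       \<le> \<bar>p (x + h) - p x - g1 \<bullet> h\<bar> + \<bar>q (x + h) - q x - g2 \<bullet> h\<bar>"
      by (simp add: inner_add_left)
    also have "\<dots> \<le> (C1 + C2) * (norm h)^2" using 1 2 h by (simp add: distrib_right add_mono)
    finally show "\<bar>p (x + h) + q (x + h) - (p x + q x) - (g1 + g2) \<bullet> h\<bar> \<le> (C1 + C2) * (norm h)^2" .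
  qed (use 1 2 in auto)
next
  case (mult p q)
  then obtain g1 C1 g2 C2 where 1: "C1 \<ge> 0" "\<forall>h. norm h \<le> 1 \<longrightarrow> \<bar>p (x + h) - p x - g1 \<bullet> h\<bar> \<le> C1 * (norm h)^2"
   and 2: "C2 \<ge> 0" "\<forall>h. norm h \<le> 1 \<longrightarrow> \<bar>q (x + h) - q x - g2 \<bullet> h\<bar> \<le> C2 * (norm h)^2" by blast
  show ?case
  proof (intro exI[of _ "p x *\<^sub>R g2 + q x *\<^sub>R g1"]
      exI[of _ "\<bar>p x\<bar> * C2 + \<bar>q x\<bar> * C1 + (norm g1 + C1) * (norm g2 + C2)"] conjI allI impI)
    fix h :: "real ^ 'n" assume h: "norm h \<le> 1"
    define a where "a = p (x + h) - p x - g1 \<bullet> h"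
    define b where "b = q (x + h) - q x - g2 \<bullet> h"
    have a: "\<bar>a\<bar> \<le> C1 * (norm h)^2" using 1 h a_def by auto
    have b: "\<bar>b\<bar> \<le> C2 * (norm h)^2" using 2 h b_def by auto
    have hh: "(norm h)^2 \<le> norm h" using h by (simp add: power2_eq_square mult_left_le)
    have pa: "\<bar>p (x + h) - p x\<bar> \<le> (norm g1 + C1) * norm h"
    proof -
      have "\<bar>p (x + h) - p x\<bar> \<le> \<bar>g1 \<bullet> h\<bar> + \<bar>a\<bar>" unfolding a_def by linarith
      also have "\<dots> \<le> norm g1 * norm h + C1 * norm h"
        using Cauchy_Schwarz_ineq2[of g1 h] a hh 1(1) mult_left_mono[OF hh 1(1)] by linarith
      finally show ?thesis by (simp add: distrib_right)
    qed
    have qb: "\<bar>q (x + h) - q x\<bar> \<le> (norm g2 + C2) * norm h"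
    proof -
      have "\<bar>q (x + h) - q x\<bar> \<le> \<bar>g2 \<bullet> h\<bar> + \<bar>b\<bar>" unfolding b_def by linarith
      also have "\<dots> \<le> norm g2 * norm h + C2 * norm h"
        using Cauchy_Schwarz_ineq2[of g2 h] b hh 2(1) mult_left_mono[OF hh 2(1)] by linarith
      finally show ?thesis by (simp add: distrib_right)
    qed
    have eq: "p (x + h) * q (x + h) - p x * q x - (p x *\<^sub>R g2 + q x *\<^sub>R g1) \<bullet> h
       = p x * b + q x * a + (p (x + h) - p x) * (q (x + h) - q x)"
      unfolding a_def b_def by (simp add: inner_add_left algebra_simps)
    have "\<bar>p x * b + q x * a + (p (x + h) - p x) * (q (x + h) - q x)\<bar>
        \<le> \<bar>p x\<bar> * \<bar>b\<bar> + \<bar>q x\<bar> * \<bar>a\<bar> + \<bar>p (x + h) - p x\<bar> * \<bar>q (x + h) - q x\<bar>"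
    proof -
      have t: "\<bar>u + v + w\<bar> \<le> \<bar>u\<bar> + \<bar>v\<bar> + \<bar>w\<bar>" for u v w :: real by arith
      show ?thesis using t[of "p x * b" "q x * a" "(p (x + h) - p x) * (q (x + h) - q x)"]
        by (simp only: abs_mult)
    qed
    also have "\<dots> \<le> \<bar>p x\<bar> * (C2 * (norm h)^2) + \<bar>q x\<bar> * (C1 * (norm h)^2)
        + ((norm g1 + C1) * norm h) * ((norm g2 + C2) * norm h)"
    proof -
      have "\<bar>p x\<bar> * \<bar>b\<bar> \<le> \<bar>p x\<bar> * (C2 * (norm h)^2)" by (rule mult_left_mono[OF b abs_ge_zero])
      moreover have "\<bar>q x\<bar> * \<bar>a\<bar> \<le> \<bar>q x\<bar> * (C1 * (norm h)^2)" by (rule mult_left_mono[OF a abs_ge_zero])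
      moreover have "0 \<le> (norm g1 + C1) * norm h" using 1(1) by simp
      then have "\<bar>p (x + h) - p x\<bar> * \<bar>q (x + h) - q x\<bar> \<le> ((norm g1 + C1) * norm h) * ((norm g2 + C2) * norm h)"
        by (intro mult_mono[OF pa qb]) auto
      ultimately show ?thesis by linarith
    qed
    also have "\<dots> = (\<bar>p x\<bar> * C2 + \<bar>q x\<bar> * C1 + (norm g1 + C1) * (norm g2 + C2)) * (norm h)^2"
      by (simp add: algebra_simps power2_eq_square)
    finally show "\<bar>p (x + h) * q (x + h) - p x * q x - (p x *\<^sub>R g2 + q x *\<^sub>R g1) \<bullet> h\<bar>
      \<le> (\<bar>p x\<bar> * C2 + \<bar>q x\<bar> * C1 + (norm g1 + C1) * (norm g2 + C2)) * (norm h)^2"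
      unfolding eq .
  qed (use 1 2 in auto)
qed


lemma diverge:
  fixes x0 :: "'a :: euclidean_space" and r :: real
  assumes r: "r > 0"
  shows "(\<integral>\<^sup>+ x \<in> ball x0 r. ennreal (norm (x - x0) powr (- real DIM('a))) \<partial>lborel) = \<infinity>"
proof -
  define d where "d = DIM('a)"
  define V where "V = unit_ball_vol (real d)"
  have V: "V > 0" unfolding V_def by simp
  define F where "F x = ennreal (norm (x - x0) powr (- real d))" for x
  define a where "a k = r / 2 ^ k" for k :: nat
  have apos: "a k > 0" for k using r by (simp add: a_def)
  have ahalf: "a (Suc k) = a k / 2" for k by (simp add: a_def)
  define A where "A k = ball x0 (a k) - ball x0 (a (Suc k))" for k
  have Asets: "A k \<in> sets lborel" for k unfolding A_def by simp
  have Amem: "x \<in> A k \<longleftrightarrow> a k / 2 \<le> norm (x - x0) \<and> norm (x - x0) < a k" for x k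
    by (auto simp: A_def ahalf dist_norm norm_minus_commute)
  have amono: "i \<le> j \<Longrightarrow> a j \<le> a i" for i j
    using r by (auto simp: a_def intro!: divide_left_mono power_increasing)
  have disj: "disjoint_family A"
  unfolding disjoint_family_on_def proof (intro ballI impI)
    fix i j :: nat assume "i \<in> UNIV" "j \<in> UNIV" "i \<noteq> j"
    show "A i \<inter> A j = {}"
    proof (cases "i < j")
      case True
      then have "a j \<le> a (Suc i)" using amono by simp
      then show ?thesis by (auto simp: Amem ahalf)
    next
      case False
      then have "j < i" using \<open>i \<noteq> j\<close> by simp
      then have "a i \<le> a (Suc j)" using amono by simp
      then show ?thesis by (auto simp: Amem ahalf)
    qed
  qed
  have sub: "(\<Union>k. A k) \<subseteq> ball x0 r"
    using amono[of 0] by (auto simp: A_def a_def) (meson order_less_le_trans)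
  have Fmeas: "F \<in> borel_measurable lborel" unfolding F_def by measurable
  define c where "c = V * (1 - 1 / 2 ^ d)"
  have cpos: "c > 0" unfolding c_def using V by (simp add: d_def)
  have each: "ennreal c \<le> (\<integral>\<^sup>+ x \<in> A k. F x \<partial>lborel)" for k
  proof -
    have em: "emeasure lborel (A k) = ennreal (V * a k ^ d - V * (a k / 2) ^ d)"
    proof -
      have "emeasure lborel (A k) = emeasure lborel (ball x0 (a k)) - emeasure lborel (ball x0 (a (Suc k)))"
        unfolding A_def
      proof (rule emeasure_Diff)
        show "emeasure lborel (ball x0 (a (Suc k))) \<noteq> \<infinity>"
          using apos[of "Suc k"] by (simp add: emeasure_ball)
        show "ball x0 (a (Suc k)) \<subseteq> ball x0 (a k)"
          using amono[of k "Suc k"] by auto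
      qed auto
      also have "\<dots> = ennreal (V * a k ^ d) - ennreal (V * (a k / 2) ^ d)"
        using apos[of k] by (simp add: emeasure_ball ahalf V_def d_def)
      also have "\<dots> = ennreal (V * a k ^ d - V * (a k / 2) ^ d)"
        using apos[of k] V by (subst ennreal_minus) (auto)
      finally show ?thesis .
    qed
    have "(\<integral>\<^sup>+ x \<in> A k. F x \<partial>lborel) \<ge> (\<integral>\<^sup>+ x. ennreal (a k powr (- real d)) * indicator (A k) x \<partial>lborel)"
    proof (rule nn_integral_mono)
      fix x
      show "ennreal (a k powr (- real d)) * indicator (A k) x \<le> F x * indicator (A k) x"
      proof (cases "x \<in> A k")
        case True
        then have "a k / 2 \<le> norm (x - x0)" "norm (x - x0) < a k" using Amem by auto
        then have "a k powr (- real d) \<le> norm (x - x0) powr (- real d)"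
          using apos[of k] by (intro powr_mono2') auto
        then show ?thesis using True by (simp add: F_def)
      qed simp
    qed
    also have "(\<integral>\<^sup>+ x. ennreal (a k powr (- real d)) * indicator (A k) x \<partial>lborel)
        = ennreal (a k powr (- real d)) * emeasure lborel (A k)"
      by (rule nn_integral_cmult_indicator) (rule Asets)
    also have "\<dots> = ennreal (a k powr (- real d) * (V * a k ^ d - V * (a k / 2) ^ d))"
      unfolding em by (rule ennreal_mult'[symmetric]) simp
    also have "a k powr (- real d) * (V * a k ^ d - V * (a k / 2) ^ d) = c"
    proof -
      have "a k powr (- real d) * a k ^ d = 1"
        using apos[of k] by (simp add: powr_minus powr_realpow)
      then show ?thesis unfolding c_def by (simp add: power_divide algebra_simps)
    qed
    finally show ?thesis .
  qed
  have "(\<Sum>k::nat. ennreal c) \<le> (\<Sum>k. (\<integral>\<^sup>+ x \<in> A k. F x \<partial>lborel))"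
    by (intro suminf_le each) auto
  also have "\<dots> = (\<integral>\<^sup>+ x \<in> (\<Union>k. A k). F x \<partial>lborel)"
    by (rule nn_integral_disjoint_family[OF Fmeas Asets disj, symmetric])
  also have "\<dots> \<le> (\<integral>\<^sup>+ x \<in> ball x0 r. F x \<partial>lborel)"
  proof (rule nn_integral_mono)
    fix x show "F x * indicator (\<Union>k. A k) x \<le> F x * indicator (ball x0 r) x"
    proof (cases "x \<in> (\<Union>k. A k)")
      case True
      then have "x \<in> ball x0 r" using sub by blast
      then show ?thesis using True by simp
    qed simp
  qed
  finally have ge: "(\<Sum>k::nat. ennreal c) \<le> (\<integral>\<^sup>+ x \<in> ball x0 r. F x \<partial>lborel)" .
  have "(\<Sum>k::nat. ennreal c) = \<infinity>"
  proof (rule ccontr)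
    assume "(\<Sum>k::nat. ennreal c) \<noteq> \<infinity>"
    then have "summable (\<lambda>k::nat. c)" using cpos by (intro summable_suminf_not_top) auto
    then show False using cpos by (simp add: summable_const_iff)
  qed
  then show ?thesis using ge unfolding F_def d_def by (simp add: top_unique)
qed



theorem propositionA4:
  fixes p :: "real ^ 'n \<Rightarrow> real" and \<theta>0 :: "real ^ 'n" and \<epsilon> m :: real
  assumes "real_poly_fun p"
    and "p \<theta>0 = 0"
    and "\<epsilon> > 0"
    and "\<forall>\<theta>\<in>ball \<theta>0 \<epsilon>. p \<theta> \<ge> 0"
    and "m \<ge> real CARD('n) / 2"
  shows "(\<integral>\<^sup>+ \<theta> \<in> ball \<theta>0 \<epsilon>. neg_pow_ennreal (p \<theta>) m \<partial>lborel) = \<infinity>"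
proof -
  note poly = assms(1) and p0 = assms(2) and eps = assms(3) and nonneg = assms(4) and mge = assms(5)
  obtain g C where C: "C \<ge> 0"
    and T: "\<And>h. norm h \<le> 1 \<Longrightarrow> \<bar>p (\<theta>0 + h) - p \<theta>0 - g \<bullet> h\<bar> \<le> C * (norm h)^2"
    using poly_taylor[OF poly, of \<theta>0] by blast
  have g0: "g = 0"
  proof (rule ccontr)
    assume gne: "g \<noteq> 0"
    define ng where "ng = norm g"
    have ng: "ng > 0" using gne by (simp add: ng_def)
    define s where "s = min (min 1 (\<epsilon>/2)) (ng / (C + 1))"
    have s: "s > 0" "s \<le> 1" "s < \<epsilon>" "C * s < ng"
    proof -
      show "s > 0" using eps ng C by (simp add: s_def)
      show "s \<le> 1" by (simp add: s_def)
      show "s < \<epsilon>" using eps by (simp add: s_def)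
      have "C * s \<le> C * (ng / (C + 1))" using C by (intro mult_left_mono) (auto simp: s_def)
      also have "\<dots> < ng" using C ng by (simp add: field_simps)
      finally show "C * s < ng" .
    qed
    define h where "h = - (s / ng) *\<^sub>R g"
    have nh: "norm h = s" using ng s by (simp add: h_def ng_def)
    have gg: "g \<bullet> g = ng * ng" by (simp add: ng_def power2_norm_eq_inner[symmetric] power2_eq_square)
    have gh: "g \<bullet> h = - s * ng"
    proof -
      have "g \<bullet> h = - (s / ng) * (g \<bullet> g)" by (simp add: h_def)
      also have "\<dots> = - s * ng" using ng unfolding gg by (simp add: field_simps)
      finally show ?thesis .
    qed
    have "\<theta>0 + h \<in> ball \<theta>0 \<epsilon>" using nh s by (simp add: dist_norm)
    then have "p (\<theta>0 + h) \<ge> 0" using nonneg by blast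
    moreover have "p (\<theta>0 + h) \<le> - s * ng + C * s^2" using T[of h] nh s gh p0 by simp
    moreover have "C * s^2 < s * ng"
    proof -
      have "s * (C * s) < s * ng" using s by (intro mult_strict_left_mono) auto
      then show ?thesis by (simp add: power2_eq_square ac_simps)
    qed
    ultimately show False by linarith
  qed
  define r where "r = min 1 \<epsilon>"
  have r: "r > 0" "r \<le> 1" "r \<le> \<epsilon>" using eps by (auto simp: r_def)
  define n where "n = CARD('n)"
  define K where "K = (C + 1) powr (- m)"
  have K: "K > 0" using C by (simp add: K_def)
  have mpos: "m \<ge> 0" using mge by (simp add: n_def)
  have pw: "ennreal (K * norm (\<theta> - \<theta>0) powr (- real n)) * indicator (ball \<theta>0 r) \<theta>
      \<le> neg_pow_ennreal (p \<theta>) m * indicator (ball \<theta>0 \<epsilon>) \<theta>" for \<theta>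
  proof (cases "\<theta> \<in> ball \<theta>0 r")
    case True
    define x where "x = norm (\<theta> - \<theta>0)"
    have x: "x < r" "x \<ge> 0" using True by (auto simp: x_def dist_norm norm_minus_commute)
    have inb: "\<theta> \<in> ball \<theta>0 \<epsilon>" using True r by auto
    have pge: "p \<theta> \<ge> 0" using nonneg inb by blast
    have ple: "p \<theta> \<le> C * x^2" using T[of "\<theta> - \<theta>0"] x r g0 p0 by (simp add: x_def)
    show ?thesis
    proof (cases "p \<theta> = 0")
      case True
      then show ?thesis using inb by (simp add: neg_pow_ennreal_def)
    next
      case False
      then have ppos: "p \<theta> > 0" using pge by simp
      have xpos: "x > 0"
      proof (rule ccontr)
        assume "\<not> x > 0"
        then have "x = 0" using x by simp
        then show False using ple ppos by simp
      qed
      have "K * x powr (- real n) \<le> K * x powr (- (2 * m))"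
      proof -
        have "- (2 * m) \<le> - real n" using mge by (simp add: n_def)
        moreover have "x \<le> 1" using x r by linarith
        ultimately have "x powr (- real n) \<le> x powr (- (2 * m))"
          using x by (intro powr_mono') auto
        then show ?thesis using K by (intro mult_left_mono) auto
      qed
      also have "\<dots> = ((C + 1) * x^2) powr (- m)"
      proof -
        have x2: "x^2 = x powr 2" using xpos by (simp add: powr_numeral)
        have "((C + 1) * x^2) powr (- m) = (C + 1) powr (- m) * (x^2) powr (- m)"
          using C by (simp add: powr_mult)
        also have "(x^2) powr (- m) = x powr (- (2 * m))" unfolding x2 powr_powr by simp
        finally show ?thesis by (simp add: K_def)
      qed
      also have "\<dots> \<le> p \<theta> powr (- m)"
      proof -
        have "0 \<le> x^2" by simp
        moreover have "(C + 1) * x^2 = C * x^2 + x^2" by (simp add: distrib_right)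
        ultimately have "p \<theta> \<le> (C + 1) * x^2" using ple by linarith
        then show ?thesis using ppos mpos by (intro powr_mono2') auto
      qed
      finally show ?thesis using inb False \<open>\<theta> \<in> ball \<theta>0 r\<close> by (simp add: neg_pow_ennreal_def x_def ennreal_leI)
    qed
  qed simp
  have "\<infinity> = ennreal K * (\<integral>\<^sup>+ \<theta> \<in> ball \<theta>0 r. ennreal (norm (\<theta> - \<theta>0) powr (- real n)) \<partial>lborel)"
    using diverge[OF r(1), of \<theta>0] K by (simp add: n_def ennreal_mult_top)
  also have "\<dots> = (\<integral>\<^sup>+ \<theta>. ennreal K * (ennreal (norm (\<theta> - \<theta>0) powr (- real n)) * indicator (ball \<theta>0 r) \<theta>) \<partial>lborel)"
    by (rule nn_integral_cmult[symmetric]) (measurable, simp add: pred_def)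
  also have "\<dots> = (\<integral>\<^sup>+ \<theta>. ennreal (K * norm (\<theta> - \<theta>0) powr (- real n)) * indicator (ball \<theta>0 r) \<theta> \<partial>lborel)"
    using K by (simp add: ennreal_mult mult.assoc)
  also have "\<dots> \<le> (\<integral>\<^sup>+ \<theta> \<in> ball \<theta>0 \<epsilon>. neg_pow_ennreal (p \<theta>) m \<partial>lborel)"
    by (rule nn_integral_mono) (rule pw)
  finally show ?thesis by (simp add: top_unique)
qed

end
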